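(* Let $X$ and $Y$ be complete orthomodular lattices. Then (i) the set $\mathrm{Lin}(X,Y)$ of all linear maps $X\to Y$, ordered pointwise, is a complete lattice; and (ii) $\mathrm{Lin}(X)=\mathrm{Lin}(X,X)$, with composition as multiplication, the identity map as unit, pointwise joins, and involution $f\mapsto f^\star$, is a unital involutive quantale.
   Context: An ortholattice is a bounded lattice with an involutive order-reversing map $x\mapsto x^\perp$ satisfying $x\wedge x^\perp=0$; it is orthomodular if $x\le y$ implies $y=x\vee(x^\perp\wedge y)$. Write $x\perp y$ iff $x\le y^\perp$. A map $f\colon X\to Y$ between complete orthomodular lattices is linear if there is $h\colon Y\to X$ with $f(x)\perp y \iff x\perp h(y)$ for all $x,y$; such $h$ is unique, denoted $f^\star$. A quantale is a complete lattice $Q$ with an associative multiplication distributing over arbitrary joins on both sides; it is unital if it has $e$ with $e\cdot a=a=a\cdot e$ for all $a$; it is involutive if equipped with a semigroup involution $*$ (i.e. $a^{**}=a$, $(ab)^*=b^*a^*$) preserving arbitrary joins. *)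

theory Defs
  imports Main
begin

definition complete_oml :: "('a::complete_lattice \<Rightarrow> 'a) \<Rightarrow> bool" where
  "complete_oml oc \<longleftrightarrow>
     (\<forall>x. oc (oc x) = x) \<and>
     (\<forall>x y. x \<le> y \<longrightarrow> oc y \<le> oc x) \<and>
     (\<forall>x. inf x (oc x) = bot) \<and>
     (\<forall>x y. x \<le> y \<longrightarrow> y = sup x (inf (oc x) y))"

definition orth :: "('a::complete_lattice \<Rightarrow> 'a) \<Rightarrow> 'a \<Rightarrow> 'a \<Rightarrow> bool" where
  "orth oc x y \<longleftrightarrow> x \<le> oc y"

definition is_adjoint ::
  "('a::complete_lattice \<Rightarrow> 'a) \<Rightarrow> ('b::complete_lattice \<Rightarrow> 'b) \<Rightarrow> ('a \<Rightarrow> 'b) \<Rightarrow> ('b \<Rightarrow> 'a) \<Rightarrow> bool" where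
  "is_adjoint ocX ocY f h \<longleftrightarrow> (\<forall>x y. orth ocY (f x) y \<longleftrightarrow> orth ocX x (h y))"

definition linear_map ::
  "('a::complete_lattice \<Rightarrow> 'a) \<Rightarrow> ('b::complete_lattice \<Rightarrow> 'b) \<Rightarrow> ('a \<Rightarrow> 'b) \<Rightarrow> bool" where
  "linear_map ocX ocY f \<longleftrightarrow> (\<exists>h. is_adjoint ocX ocY f h)"

definition Lin ::
  "('a::complete_lattice \<Rightarrow> 'a) \<Rightarrow> ('b::complete_lattice \<Rightarrow> 'b) \<Rightarrow> ('a \<Rightarrow> 'b) set" where
  "Lin ocX ocY = {f. linear_map ocX ocY f}"

definition adj ::
  "('a::complete_lattice \<Rightarrow> 'a) \<Rightarrow> ('b::complete_lattice \<Rightarrow> 'b) \<Rightarrow> ('a \<Rightarrow> 'b) \<Rightarrow> ('b \<Rightarrow> 'a)" where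
  "adj ocX ocY f = (THE h. is_adjoint ocX ocY f h)"

definition complete_lattice_on :: "'q set \<Rightarrow> ('q \<Rightarrow> 'q \<Rightarrow> bool) \<Rightarrow> bool" where
  "complete_lattice_on Q le \<longleftrightarrow>
     (\<forall>a\<in>Q. le a a) \<and>
     (\<forall>a\<in>Q. \<forall>b\<in>Q. le a b \<and> le b a \<longrightarrow> a = b) \<and>
     (\<forall>a\<in>Q. \<forall>b\<in>Q. \<forall>c\<in>Q. le a b \<and> le b c \<longrightarrow> le a c) \<and>
     (\<forall>A\<subseteq>Q. \<exists>s\<in>Q. (\<forall>a\<in>A. le a s) \<and> (\<forall>u\<in>Q. (\<forall>a\<in>A. le a u) \<longrightarrow> le s u)) \<and>
     (\<forall>A\<subseteq>Q. \<exists>i\<in>Q. (\<forall>a\<in>A. le i a) \<and> (\<forall>l\<in>Q. (\<forall>a\<in>A. le l a) \<longrightarrow> le l i))"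

definition unital_involutive_quantale_on ::
  "'q set \<Rightarrow> ('q \<Rightarrow> 'q \<Rightarrow> bool) \<Rightarrow> ('q set \<Rightarrow> 'q) \<Rightarrow> ('q \<Rightarrow> 'q \<Rightarrow> 'q) \<Rightarrow> 'q \<Rightarrow> ('q \<Rightarrow> 'q) \<Rightarrow> bool"
  where
  "unital_involutive_quantale_on Q le J m e invo \<longleftrightarrow>
     complete_lattice_on Q le \<and>
     (\<forall>A\<subseteq>Q. J A \<in> Q \<and> (\<forall>a\<in>A. le a (J A)) \<and> (\<forall>u\<in>Q. (\<forall>a\<in>A. le a u) \<longrightarrow> le (J A) u)) \<and>
     (\<forall>a\<in>Q. \<forall>b\<in>Q. m a b \<in> Q) \<and>
     (\<forall>a\<in>Q. \<forall>b\<in>Q. \<forall>c\<in>Q. m (m a b) c = m a (m b c)) \<and>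
     (\<forall>a\<in>Q. \<forall>A\<subseteq>Q. m a (J A) = J ((\<lambda>b. m a b) ` A) \<and> m (J A) a = J ((\<lambda>b. m b a) ` A)) \<and>
     e \<in> Q \<and> (\<forall>a\<in>Q. m e a = a \<and> m a e = a) \<and>
     (\<forall>a\<in>Q. invo a \<in> Q \<and> invo (invo a) = a) \<and>
     (\<forall>a\<in>Q. \<forall>b\<in>Q. invo (m a b) = m (invo b) (invo a)) \<and>
     (\<forall>A\<subseteq>Q. invo (J A) = J (invo ` A))"

end

theory Submission
  imports Defs
begin

lemma oc_inv: "complete_oml oc \<Longrightarrow> oc (oc x) = x"
  by (simp add: complete_oml_def)

lemma oc_swap: "complete_oml oc \<Longrightarrow> (x \<le> oc y) = (y \<le> oc x)"
  unfolding complete_oml_def by metis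

lemma oc_le_iff: "complete_oml oc \<Longrightarrow> (oc x \<le> oc y) = (y \<le> x)"
  unfolding complete_oml_def by metis

lemma adj_unique:
  assumes o: "complete_oml ocX" and "is_adjoint ocX ocY f h1" "is_adjoint ocX ocY f h2"
  shows "h1 = h2"
proof
  fix y
  have "\<And>x. (x \<le> ocX (h1 y)) = (x \<le> ocX (h2 y))"
    using assms(2,3) unfolding is_adjoint_def orth_def by blast
  hence "ocX (h1 y) = ocX (h2 y)" by (meson order_antisym order_refl)
  thus "h1 y = h2 y" using oc_inv[OF o] by metis
qed

lemma adj_is:
  assumes o: "complete_oml ocX" and "f \<in> Lin ocX ocY"
  shows "is_adjoint ocX ocY f (adj ocX ocY f)"
proof -
  obtain h where h: "is_adjoint ocX ocY f h" using assms(2) unfolding Lin_def linear_map_def by blast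
  show ?thesis unfolding adj_def
    by (rule theI[of _ h]) (use h adj_unique[OF o] in auto)
qed

lemma adj_eq:
  assumes o: "complete_oml ocX" and "is_adjoint ocX ocY f h"
  shows "adj ocX ocY f = h"
  using adj_is[OF o, of f ocY] assms adj_unique[OF o]
  unfolding Lin_def linear_map_def by blast

lemma adj_sym:
  assumes oX: "complete_oml ocX" and oY: "complete_oml ocY" and "is_adjoint ocX ocY f h"
  shows "is_adjoint ocY ocX h f"
  using assms(3) oc_swap[OF oX] oc_swap[OF oY] unfolding is_adjoint_def orth_def by metis

lemma Lin_Sup:
  assumes oX: "complete_oml ocX" and A: "A \<subseteq> Lin ocX ocY"
  shows "is_adjoint ocX ocY (Sup A) (\<lambda>y. Sup ((\<lambda>f. adj ocX ocY f y) ` A))"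
  unfolding is_adjoint_def orth_def
proof (intro allI)
  fix x y
  have "(Sup A x \<le> ocY y) = (\<forall>f\<in>A. f x \<le> ocY y)" by (simp add: Sup_apply SUP_le_iff)
  also have "\<dots> = (\<forall>f\<in>A. x \<le> ocX (adj ocX ocY f y))"
    using adj_is[OF oX] A unfolding is_adjoint_def orth_def by blast
  also have "\<dots> = (\<forall>f\<in>A. adj ocX ocY f y \<le> ocX x)" using oc_swap[OF oX] by blast
  also have "\<dots> = (Sup ((\<lambda>f. adj ocX ocY f y) ` A) \<le> ocX x)" by (simp add: SUP_le_iff)
  also have "\<dots> = (x \<le> ocX (Sup ((\<lambda>f. adj ocX ocY f y) ` A)))" using oc_swap[OF oX] by blast
  finally show "(Sup A x \<le> ocY y) = (x \<le> ocX (Sup ((\<lambda>f. adj ocX ocY f y) ` A)))" .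
qed

lemma Sup_in_Lin:
  assumes oX: "complete_oml ocX" and A: "A \<subseteq> Lin ocX ocY"
  shows "Sup A \<in> Lin ocX ocY"
  using Lin_Sup[OF assms] unfolding Lin_def linear_map_def by blast

lemma Lin_preserves_Sup:
  assumes oX: "complete_oml ocX" and oY: "complete_oml ocY" and f: "f \<in> Lin ocX ocY"
  shows "f (Sup S) = Sup (f ` S)"
proof -
  have *: "(f (Sup S) \<le> ocY y) = (Sup (f ` S) \<le> ocY y)" for y
  proof -
    have "(f (Sup S) \<le> ocY y) = (Sup S \<le> ocX (adj ocX ocY f y))"
      using adj_is[OF oX f] unfolding is_adjoint_def orth_def by blast
    also have "\<dots> = (\<forall>s\<in>S. s \<le> ocX (adj ocX ocY f y))" by (simp add: Sup_le_iff)
    also have "\<dots> = (\<forall>s\<in>S. f s \<le> ocY y)"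
      using adj_is[OF oX f] unfolding is_adjoint_def orth_def by blast
    also have "\<dots> = (Sup (f ` S) \<le> ocY y)" by (simp add: SUP_le_iff)
    finally show ?thesis .
  qed
  have "\<And>z. (f (Sup S) \<le> z) = (Sup (f ` S) \<le> z)"
    using *[of "ocY z" for z] oc_inv[OF oY] by metis
  thus ?thesis by (meson order_antisym order_refl)
qed

lemma comp_adj:
  assumes "is_adjoint ocX ocX a ha" "is_adjoint ocX ocX b hb"
  shows "is_adjoint ocX ocX (a \<circ> b) (hb \<circ> ha)"
  using assms unfolding is_adjoint_def orth_def by simp

lemma id_adj: "is_adjoint ocX ocX id id"
  unfolding is_adjoint_def orth_def by simp

theorem mainTheorem3:
  fixes ocX :: "'a::complete_lattice \<Rightarrow> 'a" and ocY :: "'b::complete_lattice \<Rightarrow> 'b"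
  assumes "complete_oml ocX" and "complete_oml ocY"
  shows "complete_lattice_on (Lin ocX ocY) (\<le>) \<and>
         unital_involutive_quantale_on (Lin ocX ocX) (\<le>) Sup (\<circ>) id (adj ocX ocX)"
proof -
  note oX = assms(1) and oY = assms(2)
  have cl: "complete_lattice_on (Lin ocX ocY') (\<le>)" if "complete_oml ocY'" for ocY' :: "'c::complete_lattice \<Rightarrow> 'c"
    unfolding complete_lattice_on_def
  proof (intro conjI ballI allI impI)
    show "\<And>a b::'a\<Rightarrow>'c. a \<le> b \<and> b \<le> a \<Longrightarrow> a = b" by (auto intro: order_antisym)
    show "\<And>a b c::'a\<Rightarrow>'c. a \<le> b \<and> b \<le> c \<Longrightarrow> a \<le> c" by auto
    fix A assume A: "A \<subseteq> Lin ocX ocY'"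
    show "\<exists>s\<in>Lin ocX ocY'. (\<forall>a\<in>A. a \<le> s) \<and> (\<forall>u\<in>Lin ocX ocY'. (\<forall>a\<in>A. a \<le> u) \<longrightarrow> s \<le> u)"
      using Sup_in_Lin[OF oX A] by (auto intro: Sup_upper Sup_least)
    let ?L = "{l \<in> Lin ocX ocY'. \<forall>a\<in>A. l \<le> a}"
    show "\<exists>i\<in>Lin ocX ocY'. (\<forall>a\<in>A. i \<le> a) \<and> (\<forall>l\<in>Lin ocX ocY'. (\<forall>a\<in>A. l \<le> a) \<longrightarrow> l \<le> i)"
      by (rule bexI[of _ "Sup ?L"]) (auto intro: Sup_upper Sup_least Sup_in_Lin[OF oX])
  qed auto
  have linadj: "adj ocX ocX f \<in> Lin ocX ocX" "adj ocX ocX (adj ocX ocX f) = f" if "f \<in> Lin ocX ocX" for f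
  proof -
    have "is_adjoint ocX ocX (adj ocX ocX f) f" using adj_sym[OF oX oX adj_is[OF oX that]] .
    thus "adj ocX ocX f \<in> Lin ocX ocX" "adj ocX ocX (adj ocX ocX f) = f"
      unfolding Lin_def linear_map_def using adj_eq[OF oX] by auto
  qed
  have comp: "a \<circ> b \<in> Lin ocX ocX" "adj ocX ocX (a \<circ> b) = adj ocX ocX b \<circ> adj ocX ocX a"
    if "a \<in> Lin ocX ocX" "b \<in> Lin ocX ocX" for a b
  proof -
    have "is_adjoint ocX ocX (a \<circ> b) (adj ocX ocX b \<circ> adj ocX ocX a)"
      by (rule comp_adj) (use adj_is[OF oX] that in auto)
    thus "a \<circ> b \<in> Lin ocX ocX" "adj ocX ocX (a \<circ> b) = adj ocX ocX b \<circ> adj ocX ocX a"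
      unfolding Lin_def linear_map_def using adj_eq[OF oX] by auto
  qed
  have supadj: "adj ocX ocX (Sup A) = Sup (adj ocX ocX ` A)" if "A \<subseteq> Lin ocX ocX" for A
  proof -
    have "adj ocX ocX (Sup A) = (\<lambda>y. Sup ((\<lambda>f. adj ocX ocX f y) ` A))"
      using adj_eq[OF oX Lin_Sup[OF oX that]] .
    also have "\<dots> = Sup (adj ocX ocX ` A)" by (auto simp: Sup_apply image_image)
    finally show ?thesis .
  qed
  have distr: "a \<circ> Sup A = Sup ((\<lambda>b. a \<circ> b) ` A) \<and> Sup A \<circ> a = Sup ((\<lambda>b. b \<circ> a) ` A)"
    if "a \<in> Lin ocX ocX" "A \<subseteq> Lin ocX ocX" for a A
  proof
    show "a \<circ> Sup A = Sup ((\<lambda>b. a \<circ> b) ` A)"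
    proof
      fix x
      have "(a \<circ> Sup A) x = a (Sup ((\<lambda>f. f x) ` A))" by (simp add: Sup_apply)
      also have "\<dots> = Sup (a ` (\<lambda>f. f x) ` A)" using Lin_preserves_Sup[OF oX oX that(1)] .
      also have "\<dots> = Sup ((\<lambda>b. a \<circ> b) ` A) x" by (simp add: Sup_apply image_image)
      finally show "(a \<circ> Sup A) x = Sup ((\<lambda>b. a \<circ> b) ` A) x" .
    qed
    show "Sup A \<circ> a = Sup ((\<lambda>b. b \<circ> a) ` A)"
      by (auto simp: Sup_apply image_image)
  qed
  have idL: "id \<in> Lin ocX ocX" using id_adj unfolding Lin_def linear_map_def by blast
  show ?thesis
    unfolding unital_involutive_quantale_on_def
    using cl[OF oY] cl[OF oX] Sup_in_Lin[OF oX] linadj comp supadj distr idL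
    by (auto intro: Sup_upper Sup_least simp: o_assoc)
qed

end
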